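(* For any positive integers $m$ and $n$ there exist a reflexive lattice polytope $P$ and indices $i_1<j_1<i_2<j_2<\cdots<i_m<j_m<i_{m+1}$ such that \[ h^*_{i_\ell}-h^*_{j_\ell}\ge n\quad\text{and}\quad h^*_{i_{\ell+1}}-h^*_{j_\ell}\ge n\qquad\text{for }1\le\ell\le m, \] where $h^*(P)=(h^*_0,\ldots,h^*_{\dim P})$. Furthermore, $P$ can be chosen so that $\dim P=O(m\log\log n)$.
   Context: For a lattice $N'$ and a $d$-dimensional lattice polytope $P\subset N'_{\mathbb R}$, $\operatorname{Ehr}_P(t)=1+\sum_{m\ge1}\#(mP\cap N')\,t^m$ and $(1-t)^{d+1}\operatorname{Ehr}_P(t)=h^*_0+\cdots+h^*_dt^d$. $P$ is reflexive if $0$ is in its interior and $P^\circ=\{u\in M'_{\mathbb R}:\langle u,v\rangle\ge-1\ \forall v\in P\}$ has vertices in $M'=\operatorname{Hom}(N',\mathbb Z)$. The dimension bound means there is an absolute constant $C$ such that $P$ can be chosen with $\dim P\le C\,m\log\log n$ (for $n$ large enough that $\log\log n$ is defined and positive). *)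

theory Defs
  imports Complex_Main "HOL-Computational_Algebra.Formal_Power_Series"
begin

text \<open>Lattice N' = Z^d, realised concretely: points of R^d are functions nat => real
  vanishing outside {..<d}; lattice points are functions nat => int vanishing outside {..<d}.\<close>

definition rvec :: "nat \<Rightarrow> (nat \<Rightarrow> real) set" where
  "rvec d = {x. \<forall>i\<ge>d. x i = 0}"

definition zvec :: "nat \<Rightarrow> (nat \<Rightarrow> int) set" where
  "zvec d = {z. \<forall>i\<ge>d. z i = 0}"

definition of_zvec :: "(nat \<Rightarrow> int) \<Rightarrow> (nat \<Rightarrow> real)" where
  "of_zvec z = (\<lambda>i. real_of_int (z i))"

definition dinner :: "nat \<Rightarrow> (nat \<Rightarrow> real) \<Rightarrow> (nat \<Rightarrow> real) \<Rightarrow> real" where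
  "dinner d u x = (\<Sum>i<d. u i * x i)"

definition lconv :: "(nat \<Rightarrow> int) set \<Rightarrow> (nat \<Rightarrow> real) set" where
  "lconv V = {x. \<exists>c :: (nat \<Rightarrow> int) \<Rightarrow> real. (\<forall>v\<in>V. c v \<ge> 0) \<and> sum c V = 1 \<and>
                   x = (\<lambda>i. \<Sum>v\<in>V. c v * real_of_int (v i))}"

definition lattice_polytope :: "nat \<Rightarrow> (nat \<Rightarrow> int) set \<Rightarrow> bool" where
  "lattice_polytope d V \<longleftrightarrow> finite V \<and> V \<noteq> {} \<and> V \<subseteq> zvec d"

definition lattice_count :: "nat \<Rightarrow> (nat \<Rightarrow> int) set \<Rightarrow> nat \<Rightarrow> nat" where
  "lattice_count d V t = card {z \<in> zvec d. of_zvec z \<in> (\<lambda>x. (\<lambda>i. real t * x i)) ` lconv V}"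

definition ehrhart_series :: "nat \<Rightarrow> (nat \<Rightarrow> int) set \<Rightarrow> int fps" where
  "ehrhart_series d V = Abs_fps (\<lambda>t. if t = 0 then 1 else int (lattice_count d V t))"

definition hstar :: "nat \<Rightarrow> (nat \<Rightarrow> int) set \<Rightarrow> nat \<Rightarrow> int" where
  "hstar d V k = fps_nth ((1 - fps_X) ^ (d + 1) * ehrhart_series d V) k"

definition zero_interior :: "nat \<Rightarrow> (nat \<Rightarrow> real) set \<Rightarrow> bool" where
  "zero_interior d S \<longleftrightarrow> (\<exists>e>0. \<forall>x\<in>rvec d. (\<Sum>i<d. (x i)\<^sup>2) < e\<^sup>2 \<longrightarrow> x \<in> S)"

definition polar :: "nat \<Rightarrow> (nat \<Rightarrow> real) set \<Rightarrow> (nat \<Rightarrow> real) set" where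
  "polar d S = {u \<in> rvec d. \<forall>v\<in>S. dinner d u v \<ge> -1}"

definition is_vertex :: "(nat \<Rightarrow> real) set \<Rightarrow> (nat \<Rightarrow> real) \<Rightarrow> bool" where
  "is_vertex S u \<longleftrightarrow> u \<in> S \<and>
     (\<forall>a\<in>S. \<forall>b\<in>S. \<forall>t::real. 0 < t \<and> t < 1 \<and> u = (\<lambda>i. (1 - t) * a i + t * b i) \<longrightarrow> a = b)"

definition reflexive_polytope :: "nat \<Rightarrow> (nat \<Rightarrow> int) set \<Rightarrow> bool" where
  "reflexive_polytope d V \<longleftrightarrow> lattice_polytope d V \<and> zero_interior d (lconv V) \<and>
     (\<forall>u. is_vertex (polar d (lconv V)) u \<longrightarrow> (\<forall>i. u i \<in> \<int>))"

end

theory Submission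
  imports Defs "HOL-Analysis.Complex_Transcendental"
begin

unbundle fps_syntax

definition ev :: "nat \<Rightarrow> nat \<Rightarrow> int" where
  "ev i = (\<lambda>j. if j = i then 1 else 0)"

lemma sum_ev: "finite A \<Longrightarrow> (\<Sum>i\<in>A. f i * real_of_int (ev j i)) = (if j \<in> A then f j else 0)"
proof -
  assume A: "finite A"
  have "f i * real_of_int (ev j i) = (if i = j then f j else 0)" for i by (simp add: ev_def)
  then show ?thesis using A by (simp add: sum.delta')
qed

locale wsimplex =
  fixes d :: nat and w :: "nat \<Rightarrow> int"
  assumes wpos: "\<And>i. i < d \<Longrightarrow> w i \<ge> 1"
    and wzero: "\<And>i. i \<ge> d \<Longrightarrow> w i = 0"
    and wdvd: "\<And>i. i < d \<Longrightarrow> w i dvd (1 + (\<Sum>j<d. w j))"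
begin

definition WW :: int where "WW = 1 + (\<Sum>j<d. w j)"
definition mw :: "nat \<Rightarrow> int" where "mw = (\<lambda>j. - w j)"
definition VV :: "(nat \<Rightarrow> int) set" where "VV = insert mw (ev ` {..<d})"

lemma WW_pos: "WW \<ge> 1"
proof -
  have "0 \<le> sum w {..<d}" by (rule sum_nonneg) (use wpos in force)
  then show ?thesis unfolding WW_def by simp
qed

lemma w_le_WW: "i < d \<Longrightarrow> w i < WW"
proof -
  assume i: "i < d"
  have "w i \<le> (\<Sum>j<d. w j)"
    using i by (intro member_le_sum) (use wpos in force)+
  then show ?thesis unfolding WW_def by simp
qed

lemma inj_ev: "inj ev"
proof (rule injI)
  fix a b assume "ev a = ev b"
  then have "ev a a = ev b a" by simp
  then show "a = b" unfolding ev_def by (auto split: if_splits)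
qed

lemma mw_notin: "mw \<notin> ev ` {..<d}"
proof
  assume "mw \<in> ev ` {..<d}"
  then obtain i where i: "i < d" "mw = ev i" by auto
  then have "mw i = ev i i" by simp
  then show False using wpos[OF i(1)] unfolding mw_def ev_def by simp
qed

lemma finite_VV: "finite VV" unfolding VV_def by simp

lemma sum_VV: "sum f VV = f mw + (\<Sum>i<d. f (ev i))"
proof -
  have "sum f VV = f mw + sum f (ev ` {..<d})"
    unfolding VV_def using mw_notin by simp
  also have "sum f (ev ` {..<d}) = (\<Sum>i<d. f (ev i))"
    using inj_ev by (simp add: sum.reindex inj_on_def inj_def)
  finally show ?thesis .
qed

lemma VV_zvec: "VV \<subseteq> zvec d"
  unfolding VV_def zvec_def mw_def ev_def using wzero by auto

lemma lattice_polytope_VV: "lattice_polytope d VV"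
  unfolding lattice_polytope_def using finite_VV VV_zvec by (auto simp: VV_def)

lemma comb_coord:
  "(\<Sum>v\<in>VV. c v * real_of_int (v j)) = - c mw * w j + (if j < d then c (ev j) else 0)"
proof -
  have "(\<Sum>v\<in>VV. c v * real_of_int (v j)) = c mw * (- w j) + (\<Sum>i<d. c (ev i) * (if j = i then 1 else 0))"
    by (simp add: sum_VV mw_def ev_def if_distrib[of real_of_int] cong: if_cong)
  also have "(\<Sum>i<d. c (ev i) * (if j = i then 1 else 0)) = (if j < d then c (ev j) else 0)"
    by (simp add: if_distrib[of "\<lambda>x. c _ * x"] cong: if_cong)
  finally show ?thesis by simp
qed

lemma lconv_iff:
  "x \<in> lconv VV \<longleftrightarrow> (\<forall>i\<ge>d. x i = 0) \<and> (\<Sum>i<d. x i) \<le> 1 \<and>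
     (\<forall>i<d. real_of_int WW * x i + real_of_int (w i) * (1 - (\<Sum>i<d. x i)) \<ge> 0)"
  (is "?L \<longleftrightarrow> ?R")
proof
  assume ?L
  then obtain c where c: "\<forall>v\<in>VV. c v \<ge> 0" "sum c VV = 1"
    "x = (\<lambda>i. \<Sum>v\<in>VV. c v * real_of_int (v i))" unfolding lconv_def by blast
  have xj: "x j = - c mw * w j + (if j < d then c (ev j) else 0)" for j
    using c(3) comb_coord by simp
  have c1: "c mw + (\<Sum>i<d. c (ev i)) = 1" using c(2) sum_VV[of c] by simp
  have s: "(\<Sum>i<d. x i) = 1 - c mw * WW"
  proof -
    have "(\<Sum>i<d. x i) = (\<Sum>i<d. - c mw * w i + c (ev i))" by (simp add: xj)
    also have "\<dots> = - c mw * (\<Sum>i<d. real_of_int (w i)) + (\<Sum>i<d. c (ev i))"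
      by (simp add: sum.distrib sum_distrib_left sum_subtractf sum_negf)
    also have "\<dots> = 1 - c mw * WW" using c1 unfolding WW_def by (simp add: algebra_simps)
    finally show ?thesis .
  qed
  have cm: "c mw \<ge> 0" using c(1) unfolding VV_def by auto
  have ce: "i < d \<Longrightarrow> c (ev i) \<ge> 0" for i using c(1) unfolding VV_def by auto
  show ?R
  proof (intro conjI allI impI)
    fix i assume "d \<le> i" then show "x i = 0" using xj wzero by simp
  next
    show "(\<Sum>i<d. x i) \<le> 1" using s cm WW_pos by simp
  next
    fix i assume i: "i < d"
    have "real_of_int WW * x i + real_of_int (w i) * (1 - (\<Sum>i<d. x i)) = WW * c (ev i)"
    proof -
      have e1: "(\<Sum>i<d. x i) = 1 - c mw * WW" using s by simp
      have e2: "x i = - c mw * w i + c (ev i)" using xj[of i] i by simp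
      show ?thesis unfolding e1 e2 by (simp add: algebra_simps)
    qed
    then show "real_of_int WW * x i + real_of_int (w i) * (1 - (\<Sum>i<d. x i)) \<ge> 0"
      using ce[OF i] WW_pos by simp
  qed
next
  assume R: ?R
  define s where "s = (\<Sum>i<d. x i)"
  define c where "c v = (if v = mw then (1 - s) / WW
      else (WW * (\<Sum>i<d. x i * v i) + (\<Sum>i<d. w i * v i) * (1 - s)) / WW)" for v
  have Wp: "real_of_int WW > 0" using WW_pos by simp
  have cev: "c (ev j) = (WW * x j + w j * (1 - s)) / WW" if "j < d" for j
  proof -
    have "ev j \<noteq> mw" using mw_notin that by (metis imageI lessThan_iff)
    moreover have "(\<Sum>i<d. x i * real_of_int (ev j i)) = x j"
      using that by (simp add: sum_ev)
    moreover have "(\<Sum>i<d. real_of_int (w i) * real_of_int (ev j i)) = w j"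
      using that sum_ev[of "{..<d}" "\<lambda>i. real_of_int (w i)" j] by simp
    ultimately show ?thesis unfolding c_def by simp
  qed
  have cmw: "c mw = (1 - s) / WW" unfolding c_def by simp
  have nonneg: "\<forall>v\<in>VV. c v \<ge> 0"
  proof
    fix v assume "v \<in> VV"
    then consider "v = mw" | j where "j < d" "v = ev j" unfolding VV_def by auto
    then show "c v \<ge> 0"
    proof cases
      case 1 then show ?thesis using R Wp cmw s_def by simp
    next
      case 2 then show ?thesis using R Wp cev[of j] s_def by simp
    qed
  qed
  have sum1: "sum c VV = 1"
  proof -
    have "sum c VV = (1 - s) / WW + (\<Sum>j<d. (WW * x j + w j * (1 - s)) / WW)"
      using sum_VV[of c] cmw cev by simp
    also have "(\<Sum>j<d. (WW * x j + w j * (1 - s)) / WW) = (WW * s + (WW - 1) * (1 - s)) / WW"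
      unfolding s_def WW_def by (simp add: sum_divide_distrib[symmetric] sum.distrib sum_distrib_left sum_distrib_right)
    finally show ?thesis using Wp by (simp add: field_simps)
  qed
  have xeq: "x = (\<lambda>i. \<Sum>v\<in>VV. c v * real_of_int (v i))"
  proof
    fix j
    show "x j = (\<Sum>v\<in>VV. c v * real_of_int (v j))"
    proof (cases "j < d")
      case True
      have "x j = - ((1 - s) / WW) * w j + (WW * x j + w j * (1 - s)) / WW"
        using Wp by (simp add: field_simps)
      then show ?thesis unfolding comb_coord cev[OF True] cmw using True by simp
    next
      case False
      then show ?thesis unfolding comb_coord using R wzero by simp
    qed
  qed
  show ?L unfolding lconv_def using nonneg sum1 xeq by blast
qed

end

lemma not_vertex:
  assumes "u \<in> S" "(\<lambda>i. u i + e i) \<in> S" "(\<lambda>i. u i - e i) \<in> S" "e k \<noteq> 0"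
  shows "\<not> is_vertex S u"
proof
  assume "is_vertex S u"
  then have H: "\<forall>a\<in>S. \<forall>b\<in>S. \<forall>t::real. 0 < t \<and> t < 1 \<and> u = (\<lambda>i. (1 - t) * a i + t * b i) \<longrightarrow> a = b"
    unfolding is_vertex_def by blast
  have ueq: "u = (\<lambda>i. (1 - 1/2) * (u i - e i) + 1/2 * (u i + e i))" by (simp add: field_simps)
  have "(\<lambda>i. u i - e i) = (\<lambda>i. u i + e i)"
    by (rule H[rule_format, OF assms(3) assms(2), of "1/2"]) (use ueq in auto)
  then have "u k - e k = u k + e k" by (rule fun_cong)
  then show False using assms(4) by simp
qed

context wsimplex
begin

lemma of_zvec_in_lconv: "v \<in> VV \<Longrightarrow> of_zvec v \<in> lconv VV"
proof -
  assume v: "v \<in> VV"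
  define c where "c = (\<lambda>u. if u = v then (1::real) else 0)"
  have "\<forall>u\<in>VV. c u \<ge> 0" unfolding c_def by simp
  moreover have "sum c VV = 1" unfolding c_def using v finite_VV by (simp add: sum.delta)
  moreover have "of_zvec v = (\<lambda>i. \<Sum>u\<in>VV. c u * real_of_int (u i))"
    unfolding c_def of_zvec_def using v finite_VV by (simp add: if_distrib[of "\<lambda>x. x * _"] sum.delta cong: if_cong)
  ultimately show ?thesis unfolding lconv_def by blast
qed

lemma dinner_ev: fixes u :: "nat \<Rightarrow> real" shows "i < d \<Longrightarrow> dinner d u (of_zvec (ev i)) = u i"
  unfolding dinner_def of_zvec_def using sum_ev[of "{..<d}" u i] by simp

lemma dinner_mw: fixes u :: "nat \<Rightarrow> real" shows "dinner d u (of_zvec mw) = - (\<Sum>i<d. w i * u i)"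
  unfolding dinner_def of_zvec_def mw_def by (simp add: sum_negf algebra_simps)

lemma polar_iff:
  fixes u :: "nat \<Rightarrow> real"
  shows "u \<in> polar d (lconv VV) \<longleftrightarrow> u \<in> rvec d \<and> (\<forall>i<d. u i \<ge> -1) \<and> (\<Sum>i<d. w i * u i) \<le> 1"
  (is "?L \<longleftrightarrow> ?R")
proof
  assume L: ?L
  then have u: "u \<in> rvec d" "\<And>v. v \<in> lconv VV \<Longrightarrow> dinner d u v \<ge> -1" unfolding polar_def by auto
  have "i < d \<Longrightarrow> u i \<ge> -1" for i
    using u(2)[OF of_zvec_in_lconv[of "ev i"]] dinner_ev[of i u] unfolding VV_def by auto
  moreover have "(\<Sum>i<d. w i * u i) \<le> 1"
    using u(2)[OF of_zvec_in_lconv[of mw]] dinner_mw[of u] unfolding VV_def by auto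
  ultimately show ?R using u(1) by auto
next
  assume R: ?R
  have gv: "dinner d u (of_zvec v) \<ge> -1" if "v \<in> VV" for v
    using that R dinner_ev dinner_mw unfolding VV_def by auto
  have "dinner d u x \<ge> -1" if x: "x \<in> lconv VV" for x
  proof -
    obtain c where c: "\<forall>v\<in>VV. c v \<ge> 0" "sum c VV = 1"
      "x = (\<lambda>i. \<Sum>v\<in>VV. c v * real_of_int (v i))" using x unfolding lconv_def by blast
    have "dinner d u x = (\<Sum>v\<in>VV. c v * dinner d u (of_zvec v))"
      unfolding c(3) dinner_def of_zvec_def
      by (simp add: sum_distrib_left sum_distrib_right algebra_simps sum.swap[of _ "{..<d}"])
    also have "\<dots> \<ge> (\<Sum>v\<in>VV. c v * (-1))"
      by (intro sum_mono mult_left_mono gv) (use c in auto)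
    finally show ?thesis using c(2) by (simp add: sum_negf)
  qed
  then show ?L unfolding polar_def using R by auto
qed

lemma zero_interior_VV: "zero_interior d (lconv VV)"
proof -
  define e :: real where "e = 1 / (WW * (d + 1))"
  have Wp: "real_of_int WW \<ge> 1" using WW_pos by simp
  have ep: "e > 0" unfolding e_def using Wp by simp
  have ebound: "e * (WW + d) \<le> 1"
  proof -
    have "real d * 1 \<le> real d * WW" by (rule mult_left_mono) (use Wp in auto)
    then have "real_of_int WW + d \<le> WW * (d + 1)" by (simp add: algebra_simps)
    then show ?thesis unfolding e_def using Wp by (simp add: field_simps)
  qed
  have "x \<in> lconv VV" if x: "x \<in> rvec d" "(\<Sum>i<d. (x i)\<^sup>2) < e\<^sup>2" for x
  proof -
    have xi: "\<bar>x i\<bar> < e" if i: "i < d" for i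
    proof -
      have "(x i)\<^sup>2 \<le> (\<Sum>i<d. (x i)\<^sup>2)" using i by (intro member_le_sum) auto
      then have "\<bar>x i\<bar>\<^sup>2 < e\<^sup>2" using x(2) by simp
      then show ?thesis using ep power2_less_imp_less[of "\<bar>x i\<bar>" e] by simp
    qed
    define s where "s = (\<Sum>i<d. x i)"
    have "\<bar>s\<bar> \<le> (\<Sum>i<d. \<bar>x i\<bar>)" unfolding s_def by (rule sum_abs)
    also have "\<dots> \<le> (\<Sum>i<d. e)" by (intro sum_mono) (use xi in force)
    finally have sb: "\<bar>s\<bar> \<le> d * e" by simp
    have "e * WW \<ge> 0" using ep Wp by simp
    then have de: "d * e \<le> 1" using ebound by (simp add: algebra_simps)
    have "real_of_int WW * x i + real_of_int (w i) * (1 - s) \<ge> 0" if i: "i < d" for i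
    proof -
      have w1: "real_of_int (w i) \<ge> 1" using wpos[OF i] by simp
      have "1 - s \<ge> 1 - d * e" using sb by simp
      moreover have "1 - d * e \<ge> 0" using de by simp
      moreover have "real_of_int (w i) * (1 - s) \<ge> 1 * (1 - s)"
        by (rule mult_right_mono) (use w1 sb de in auto)
      ultimately have "real_of_int (w i) * (1 - s) \<ge> 1 - d * e" by simp
      moreover have "real_of_int WW * x i \<ge> - (WW * e)"
      proof -
        have "real_of_int WW * (- e) \<le> real_of_int WW * x i"
          by (rule mult_left_mono) (use xi[OF i] Wp in auto)
        then show ?thesis by simp
      qed
      ultimately show ?thesis using ebound by (simp add: algebra_simps)
    qed
    moreover have "\<forall>i\<ge>d. x i = 0" using x(1) unfolding rvec_def by auto
    moreover have "s \<le> 1" using sb de by simp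
    ultimately show ?thesis unfolding lconv_iff s_def by auto
  qed
  then show ?thesis unfolding zero_interior_def using ep by blast
qed

lemma polar_vertex_int:
  fixes u :: "nat \<Rightarrow> real"
  assumes V: "is_vertex (polar d (lconv VV)) u"
  shows "u k \<in> \<int>"
proof -
  let ?P = "polar d (lconv VV)"
  have uP: "u \<in> ?P" using V unfolding is_vertex_def by auto
  then have u: "u \<in> rvec d" "\<And>i. i < d \<Longrightarrow> u i \<ge> -1" "(\<Sum>i<d. w i * u i) \<le> 1"
    unfolding polar_iff by auto
  have two: False if ij: "i < d" "j < d" "i \<noteq> j" "u i > -1" "u j > -1" for i j
  proof -
    define ep where "ep = min (u i + 1) (u j + 1) / (w i + w j)"
    have wi: "real_of_int (w i) \<ge> 1" and wj: "real_of_int (w j) \<ge> 1" using wpos ij by auto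
    have epp: "ep > 0" unfolding ep_def using ij wi wj by simp
    define e where "e = (\<lambda>k. if k = i then ep * w j else if k = j then - (ep * w i) else 0)"
    have ebi: "ep * w j \<le> u i + 1"
    proof -
      have "ep * (w i + w j) \<le> u i + 1" unfolding ep_def using wi wj by simp
      moreover have "ep * w i \<ge> 0" using epp wi by simp
      ultimately show ?thesis by (simp add: algebra_simps)
    qed
    have ebj: "ep * w i \<le> u j + 1"
    proof -
      have "ep * (w i + w j) \<le> u j + 1" unfolding ep_def using wi wj by simp
      moreover have "ep * w j \<ge> 0" using epp wj by simp
      ultimately show ?thesis by (simp add: algebra_simps)
    qed
    have sw: "(\<Sum>k<d. w k * e k) = 0"
    proof -
      have "(\<Sum>k<d. w k * e k) = (\<Sum>k<d. (if k = i then w i * (ep * w j) else 0) + (if k = j then - (w j * (ep * w i)) else 0))"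
        by (intro sum.cong) (use ij in \<open>auto simp: e_def\<close>)
      also have "\<dots> = 0" using ij by (simp add: sum.distrib)
      finally show ?thesis .
    qed
    have mem: "(\<lambda>k. u k + s * e k) \<in> ?P" if s: "s = 1 \<or> s = -1" for s
    proof -
      have "(\<lambda>k. u k + s * e k) \<in> rvec d" using u(1) ij unfolding rvec_def e_def by auto
      moreover have "u k + s * e k \<ge> -1" if k: "k < d" for k
      proof -
        have pi: "ep * w i > 0" and pj: "ep * w j > 0" using epp wi wj by auto
        show ?thesis
          using u(2)[OF k] ebi ebj s pi pj ij(3) unfolding e_def by auto
      qed
      moreover have "(\<Sum>k<d. w k * (u k + s * e k)) \<le> 1"
      proof -
        have "(\<Sum>k<d. w k * (u k + s * e k)) = (\<Sum>k<d. w k * u k) + s * (\<Sum>k<d. w k * e k)"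
          by (simp add: algebra_simps sum.distrib sum_distrib_left)
        then show ?thesis using sw u(3) by simp
      qed
      ultimately show ?thesis unfolding polar_iff by auto
    qed
    have "\<not> is_vertex ?P u"
      by (rule not_vertex[of u _ e i]) (use uP mem[of 1] mem[of "-1"] epp wj in \<open>auto simp: e_def\<close>)
    then show False using V by simp
  qed
  have one: False if i: "i < d" "u i > -1" "(\<Sum>k<d. w k * u k) < 1" for i
  proof -
    have wi: "real_of_int (w i) \<ge> 1" using wpos i by auto
    define ep where "ep = min (u i + 1) ((1 - (\<Sum>k<d. w k * u k)) / w i)"
    have epp: "ep > 0" unfolding ep_def using i wi by simp
    define e where "e = (\<lambda>k. if k = i then ep else 0)"
    have sw: "(\<Sum>k<d. w k * e k) = w i * ep"
      unfolding e_def using i by (simp add: if_distrib[of "\<lambda>x. _ * x"] cong: if_cong)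
    have mem: "(\<lambda>k. u k + s * e k) \<in> ?P" if s: "s = 1 \<or> s = -1" for s
    proof -
      have "(\<lambda>k. u k + s * e k) \<in> rvec d" using u(1) i unfolding rvec_def e_def by auto
      moreover have "u k + s * e k \<ge> -1" if k: "k < d" for k
        using u(2)[OF k] s epp unfolding e_def ep_def by (auto simp: algebra_simps)
      moreover have "(\<Sum>k<d. w k * (u k + s * e k)) \<le> 1"
      proof -
        have "(\<Sum>k<d. w k * (u k + s * e k)) = (\<Sum>k<d. w k * u k) + s * (\<Sum>k<d. w k * e k)"
          by (simp add: algebra_simps sum.distrib sum_distrib_left)
        then have "(\<Sum>k<d. w k * (u k + s * e k)) = (\<Sum>k<d. w k * u k) + s * (w i * ep)"
          using sw by simp
        moreover have "w i * ep \<le> 1 - (\<Sum>k<d. w k * u k)"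
        proof -
          have "ep \<le> (1 - (\<Sum>k<d. w k * u k)) / w i" unfolding ep_def by simp
          then show ?thesis using wi by (simp add: field_simps)
        qed
        moreover have "w i * ep > 0" using epp wi by simp
        ultimately show ?thesis using s u(3) by auto
      qed
      ultimately show ?thesis unfolding polar_iff by auto
    qed
    have "\<not> is_vertex ?P u"
      by (rule not_vertex[of u _ e i]) (use uP mem[of 1] mem[of "-1"] epp in \<open>auto simp: e_def\<close>)
    then show False using V by simp
  qed
  show ?thesis
  proof (cases "k < d")
    case False
    then show ?thesis using u(1) unfolding rvec_def by auto
  next
    case k: True
    show ?thesis
    proof (cases "u k = -1")
      case True then show ?thesis by simp
    next
      case False
      then have uk: "u k > -1" using u(2)[OF k] by simp
      have others: "u j = -1" if "j < d" "j \<noteq> k" for j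
        using two[of k j] u(2)[of j] that k uk by force
      have s1: "(\<Sum>i<d. w i * u i) = 1" using one[OF k uk] u(3) by force
      have "(\<Sum>i<d. w i * u i) = w k * u k + (\<Sum>i\<in>{..<d}-{k}. w i * u i)"
        using k by (simp add: sum.remove)
      also have "(\<Sum>i\<in>{..<d}-{k}. w i * u i) = - (\<Sum>i\<in>{..<d}-{k}. real_of_int (w i))"
        using others by (simp add: sum_negf)
      also have "(\<Sum>i\<in>{..<d}-{k}. real_of_int (w i)) = real_of_int (WW - 1 - w k)"
        unfolding WW_def using k by (simp add: sum.remove of_int_sum[symmetric] del: of_int_sum)
      finally have "w k * u k = real_of_int WW - w k" using s1 by simp
      moreover obtain q where q: "WW = w k * q" using wdvd[OF k] unfolding WW_def by (auto elim: dvdE)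
      moreover have "real_of_int (w k) \<noteq> 0" using wpos[OF k] by simp
      ultimately have "real_of_int (w k) * (u k + 1) = real_of_int (w k) * q" by (simp add: algebra_simps)
      then have "u k = q - 1" using \<open>real_of_int (w k) \<noteq> 0\<close> by simp
      then show ?thesis by simp
    qed
  qed
qed

lemma reflexive_VV: "reflexive_polytope d VV"
  unfolding reflexive_polytope_def using lattice_polytope_VV zero_interior_VV polar_vertex_int by blast

end


definition cset :: "nat \<Rightarrow> nat \<Rightarrow> (nat \<Rightarrow> nat) set" where
  "cset n s = {Y. (\<forall>i\<ge>n. Y i = 0) \<and> (\<Sum>i<n. Y i) = s}"

lemma finite_cset: "finite (cset n s)"
proof -
  have "cset n s \<subseteq> {f. \<forall>x. (x \<in> {..<n} \<longrightarrow> f x \<in> {..s}) \<and> (x \<notin> {..<n} \<longrightarrow> f x = 0)}"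
  proof
    fix Y assume Y: "Y \<in> cset n s"
    have "Y x \<le> s" if "x < n" for x
    proof -
      have "Y x \<le> (\<Sum>i<n. Y i)" using that by (intro member_le_sum) auto
      then show ?thesis using Y unfolding cset_def by simp
    qed
    then show "Y \<in> {f. \<forall>x. (x \<in> {..<n} \<longrightarrow> f x \<in> {..s}) \<and> (x \<notin> {..<n} \<longrightarrow> f x = 0)}"
      using Y unfolding cset_def by auto
  qed
  then show ?thesis by (rule finite_subset) (intro finite_set_of_finite_funs; simp)
qed

lemma cset_0: "cset 0 s = (if s = 0 then {\<lambda>_. 0} else {})"
  unfolding cset_def by auto

lemma card_cset_Suc: "card (cset (Suc n) s) = (\<Sum>j\<le>s. card (cset n (s - j)))"
proof -
  have bij: "bij_betw (\<lambda>Y. (Y n, Y(n := 0))) (cset (Suc n) s) (SIGMA j:{..s}. cset n (s - j))"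
  proof (rule bij_betw_byWitness[where f' = "\<lambda>(j, Z). Z(n := j)"])
    show "\<forall>a\<in>cset (Suc n) s. (\<lambda>(j, Z). Z(n := j)) (a n, a(n := 0)) = a" by auto
    show "\<forall>a'\<in>(SIGMA j:{..s}. cset n (s - j)). (\<lambda>Y. (Y n, Y(n := 0))) ((\<lambda>(j, Z). Z(n := j)) a') = a'"
      unfolding cset_def by auto
    show "(\<lambda>Y. (Y n, Y(n := 0))) ` cset (Suc n) s \<subseteq> (SIGMA j:{..s}. cset n (s - j))"
    proof
      fix p assume "p \<in> (\<lambda>Y. (Y n, Y(n := 0))) ` cset (Suc n) s"
      then obtain Y where Y: "Y \<in> cset (Suc n) s" "p = (Y n, Y(n := 0))" by auto
      have s: "(\<Sum>i<n. Y i) + Y n = s" using Y(1) unfolding cset_def by simp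
      have "(\<Sum>i<n. (Y(n := 0)) i) = (\<Sum>i<n. Y i)" by (intro sum.cong) auto
      then show "p \<in> (SIGMA j:{..s}. cset n (s - j))"
        using Y s unfolding cset_def by auto
    qed
    show "(\<lambda>(j, Z). Z(n := j)) ` (SIGMA j:{..s}. cset n (s - j)) \<subseteq> cset (Suc n) s"
    proof
      fix Y assume "Y \<in> (\<lambda>(j, Z). Z(n := j)) ` (SIGMA j:{..s}. cset n (s - j))"
      then obtain j Z where jZ: "j \<le> s" "Z \<in> cset n (s - j)" "Y = Z(n := j)" by auto
      have "(\<Sum>i<n. Y i) = (\<Sum>i<n. Z i)" using jZ(3) by (intro sum.cong) auto
      then show "Y \<in> cset (Suc n) s" using jZ unfolding cset_def by auto
    qed
  qed
  then have "card (cset (Suc n) s) = card (SIGMA j:{..s}. cset n (s - j))"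
    by (rule bij_betw_same_card)
  also have "\<dots> = (\<Sum>j\<le>s. card (cset n (s - j)))"
    by (rule card_SigmaI) (auto simp: finite_cset)
  finally show ?thesis .
qed

definition Cser :: "nat \<Rightarrow> int fps" where
  "Cser n = Abs_fps (\<lambda>s. int (card (cset n s)))"

lemma one_minus_X_ones: "(1 - fps_X) * Abs_fps (\<lambda>_. 1 :: int) = 1"
  by (rule fps_ext) (simp add: algebra_simps fps_X_mult_nth)

lemma Cser_Suc: "Cser (Suc n) = Cser n * Abs_fps (\<lambda>_. 1)"
proof (rule fps_ext)
  fix s
  have "Cser (Suc n) $ s = (\<Sum>j\<le>s. int (card (cset n (s - j))))"
    unfolding Cser_def by (simp add: card_cset_Suc)
  also have "\<dots> = (\<Sum>i\<le>s. int (card (cset n i)))"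
    by (rule sum.reindex_bij_witness[where i = "\<lambda>i. s - i" and j = "\<lambda>i. s - i"]) auto
  also have "\<dots> = (Cser n * Abs_fps (\<lambda>_. 1)) $ s"
    unfolding Cser_def fps_mult_nth by (simp add: atLeast0AtMost)
  finally show "Cser (Suc n) $ s = (Cser n * Abs_fps (\<lambda>_. 1)) $ s" .
qed

lemma Cser_inv: "(1 - fps_X) ^ n * Cser n = 1"
proof (induction n)
  case 0
  show ?case
  proof (rule fps_ext)
    fix s show "((1 - fps_X) ^ 0 * Cser 0) $ s = (1::int fps) $ s"
      unfolding Cser_def by (simp add: cset_0)
  qed
next
  case (Suc n)
  have "(1 - fps_X) ^ Suc n * Cser (Suc n) = ((1 - fps_X) ^ n * Cser n) * ((1 - fps_X) * Abs_fps (\<lambda>_. 1))"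
    unfolding Cser_Suc by (simp add: algebra_simps)
  also have "\<dots> = 1" using Suc one_minus_X_ones by simp
  finally show ?case .
qed


lemma div_shift:
  fixes W z a :: int
  assumes "0 < W"
  shows "(0 \<le> W * z + a) \<longleftrightarrow> (0 \<le> z + a div W)"
proof -
  have a: "a = W * (a div W) + a mod W" by simp
  have m: "0 \<le> a mod W" "a mod W < W" using assms by auto
  have e: "W * z + a = W * (z + a div W) + a mod W" by (subst a) (simp add: algebra_simps)
  show ?thesis
  proof
    assume h: "0 \<le> W * z + a"
    show "0 \<le> z + a div W"
    proof (rule ccontr)
      assume "\<not> 0 \<le> z + a div W"
      then have "z + a div W \<le> -1" by simp
      then have "W * (z + a div W) \<le> W * (-1)" using assms by (intro mult_left_mono) auto
      then show False using h e m by simp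
    qed
  next
    assume "0 \<le> z + a div W"
    then show "0 \<le> W * z + a" using e m assms by simp
  qed
qed

context wsimplex
begin

definition FF :: "int \<Rightarrow> int" where "FF k = (\<Sum>i<d. (k * w i) div WW)"
definition hh :: "int \<Rightarrow> int" where "hh r = r - FF r"
definition LL :: "nat \<Rightarrow> (nat \<Rightarrow> int) set" where
  "LL t = {z \<in> zvec d. (\<Sum>i<d. z i) \<le> int t \<and> (\<forall>i<d. 0 \<le> WW * z i + w i * (int t - (\<Sum>i<d. z i)))}"

lemma sum_w: "(\<Sum>i<d. w i) = WW - 1" unfolding WW_def by simp

lemma FF_decomp: "FF (q * WW + r) = q * (WW - 1) + FF r"
proof -
  have "((q * WW + r) * w i) div WW = q * w i + (r * w i) div WW" for i
  proof -
    have "(q * WW + r) * w i = r * w i + (q * w i) * WW" by (simp add: algebra_simps)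
    then show ?thesis using WW_pos by simp
  qed
  then have "FF (q * WW + r) = (\<Sum>i<d. q * w i + (r * w i) div WW)" unfolding FF_def by simp
  also have "\<dots> = q * (\<Sum>i<d. w i) + FF r" unfolding FF_def by (simp add: sum.distrib sum_distrib_left)
  finally show ?thesis using sum_w by simp
qed

lemma FF_le: assumes "0 \<le> r" shows "FF r \<le> r"
proof -
  have "WW * FF r = (\<Sum>i<d. WW * ((r * w i) div WW))" unfolding FF_def by (simp add: sum_distrib_left)
  also have "\<dots> \<le> (\<Sum>i<d. r * w i)"
  proof (intro sum_mono)
    fix i
    have "WW * ((r * w i) div WW) + (r * w i) mod WW = r * w i" by simp
    moreover have "(r * w i) mod WW \<ge> 0" using WW_pos by simp
    ultimately show "WW * ((r * w i) div WW) \<le> r * w i" by linarith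
  qed
  also have "\<dots> = r * (\<Sum>i<d. w i)" by (simp add: sum_distrib_left)
  also have "\<dots> = r * (WW - 1)" using sum_w by simp
  also have "\<dots> \<le> WW * r" using assms by (simp add: algebra_simps)
  finally have "WW * FF r \<le> WW * r" .
  then show ?thesis using WW_pos by simp
qed

lemma hh_nonneg: "0 \<le> r \<Longrightarrow> 0 \<le> hh r"
  unfolding hh_def using FF_le by simp

lemma LL_0: "LL 0 = {\<lambda>_. 0}"
proof
  show "LL 0 \<subseteq> {\<lambda>_. 0}"
  proof
    fix z assume z: "z \<in> LL 0"
    define s where "s = (\<Sum>i<d. z i)"
    have z1: "s \<le> 0" "\<And>i. i < d \<Longrightarrow> 0 \<le> WW * z i - w i * s" "\<And>i. i \<ge> d \<Longrightarrow> z i = 0"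
      using z unfolding LL_def s_def zvec_def by auto
    have "(\<Sum>i<d. w i * s) \<le> (\<Sum>i<d. WW * z i)" using z1(2) by (intro sum_mono) auto
    moreover have "(\<Sum>i<d. w i * s) = (\<Sum>i<d. w i) * s" by (simp add: sum_distrib_right)
    moreover have "(\<Sum>i<d. WW * z i) = WW * s" unfolding s_def by (simp add: sum_distrib_left)
    ultimately have "(WW - 1) * s \<le> WW * s" using sum_w by simp
    moreover have "(WW - 1) * s = WW * s - s" by (simp add: algebra_simps)
    ultimately have s0: "s = 0" using z1(1) by linarith
    have zi: "0 \<le> z i" if "i < d" for i
    proof -
      have "0 \<le> WW * z i" using z1(2)[OF that] s0 by simp
      then show ?thesis using WW_pos by (simp add: zero_le_mult_iff)
    qed
    have "\<forall>i\<in>{..<d}. z i = 0" using sum_nonneg_eq_0_iff[of "{..<d}" z] zi s0 unfolding s_def by auto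
    then show "z \<in> {\<lambda>_. 0}" using z1(3) by (auto intro!: ext) (metis leI lessThan_iff)
  qed
  show "{\<lambda>_. 0} \<subseteq> LL 0" unfolding LL_def zvec_def by simp
qed

lemma lconv_ne: "of_zvec mw \<in> lconv VV"
  by (rule of_zvec_in_lconv) (simp add: VV_def)

lemma lattice_count_eq: "lattice_count d VV t = card (LL t)"
proof -
  have "{z \<in> zvec d. of_zvec z \<in> (\<lambda>x. (\<lambda>i. real t * x i)) ` lconv VV} = LL t"
  proof (cases "t = 0")
    case True
    have img: "(\<lambda>x. (\<lambda>i. real t * x i)) ` lconv VV = {\<lambda>_. 0}"
    proof
      show "(\<lambda>x. (\<lambda>i. real t * x i)) ` lconv VV \<subseteq> {\<lambda>_. 0}" using True by auto
      have "(\<lambda>_. 0::real) = (\<lambda>i. real t * of_zvec mw i)" using True by simp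
      then show "{\<lambda>_. 0} \<subseteq> (\<lambda>x. (\<lambda>i. real t * x i)) ` lconv VV"
        using lconv_ne by (auto intro: rev_image_eqI)
    qed
    have "z \<in> zvec d \<and> of_zvec z = (\<lambda>_. 0) \<longleftrightarrow> z = (\<lambda>_. 0)" for z
      unfolding zvec_def of_zvec_def by (auto simp: fun_eq_iff)
    then have "{z \<in> zvec d. of_zvec z \<in> (\<lambda>x. (\<lambda>i. real t * x i)) ` lconv VV} = {\<lambda>_. 0}"
      using img by auto
    then show ?thesis using True LL_0 by simp
  next
    case False
    then have tp: "real t > 0" by simp
    have "of_zvec z \<in> (\<lambda>x. (\<lambda>i. real t * x i)) ` lconv VV \<longleftrightarrow> (\<lambda>i. z i / real t) \<in> lconv VV" for z
    proof
      assume "of_zvec z \<in> (\<lambda>x. (\<lambda>i. real t * x i)) ` lconv VV"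
      then obtain x where x: "x \<in> lconv VV" "of_zvec z = (\<lambda>i. real t * x i)" by auto
      have "(\<lambda>i. z i / real t) = x"
      proof
        fix i have "real_of_int (z i) = real t * x i" using x(2) unfolding of_zvec_def by metis
        then show "z i / real t = x i" using tp by (simp add: field_simps)
      qed
      then show "(\<lambda>i. z i / real t) \<in> lconv VV" using x(1) by simp
    next
      assume a: "(\<lambda>i. z i / real t) \<in> lconv VV"
      show "of_zvec z \<in> (\<lambda>x. (\<lambda>i. real t * x i)) ` lconv VV"
      proof (rule image_eqI[where x = "\<lambda>i. z i / real t"])
        show "of_zvec z = (\<lambda>i. real t * (z i / real t))" unfolding of_zvec_def using tp by auto
      qed (rule a)
    qed
    moreover have "z \<in> zvec d \<Longrightarrow> (\<lambda>i. z i / real t) \<in> lconv VV \<longleftrightarrow> z \<in> LL t" for z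
    proof -
      assume zv: "z \<in> zvec d"
      define s where "s = (\<Sum>i<d. z i)"
      have ss: "(\<Sum>i<d. real_of_int (z i) / real t) = s / real t"
        unfolding s_def by (simp add: sum_divide_distrib)
      have c1: "(\<forall>i\<ge>d. real_of_int (z i) / real t = 0)" using zv unfolding zvec_def by auto
      have "s / real t \<le> 1 \<longleftrightarrow> real_of_int s \<le> real t" using tp by (simp add: field_simps)
      then have c2: "s / real t \<le> 1 \<longleftrightarrow> s \<le> int t" by linarith
      have c3: "0 \<le> real_of_int WW * (z i / real t) + w i * (1 - s / real t) \<longleftrightarrow> 0 \<le> WW * z i + w i * (int t - s)" for i
      proof -
        have "real_of_int WW * (z i / real t) + w i * (1 - s / real t) = (WW * z i + w i * (real t - s)) / real t"
          using tp by (simp add: field_simps)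
        then have "0 \<le> real_of_int WW * (z i / real t) + w i * (1 - s / real t) \<longleftrightarrow> 0 \<le> real_of_int (WW * z i + w i * (int t - s))"
          using tp by (simp add: zero_le_divide_iff)
        then show ?thesis by linarith
      qed
      show ?thesis unfolding lconv_iff ss LL_def using zv c1 c2 c3 unfolding s_def by auto
    qed
    ultimately show ?thesis unfolding LL_def by auto
  qed
  then show ?thesis unfolding lattice_count_def by simp
qed

end


context wsimplex
begin

definition TT :: "nat \<Rightarrow> (nat \<times> (nat \<Rightarrow> nat)) set" where
  "TT t = (SIGMA r:{..<nat WW}. (if hh (int r) \<le> int t then cset (Suc d) (nat (int t - hh (int r))) else {}))"

definition phi :: "nat \<Rightarrow> (nat \<Rightarrow> int) \<Rightarrow> nat \<times> (nat \<Rightarrow> nat)" where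
  "phi t z = (let k = int t - (\<Sum>i<d. z i) in
     (nat (k mod WW), \<lambda>i. if i < d then nat (z i + (k * w i) div WW)
                         else if i = d then nat (k div WW) else 0))"

definition psi :: "nat \<times> (nat \<Rightarrow> nat) \<Rightarrow> (nat \<Rightarrow> int)" where
  "psi p = (\<lambda>i. if i < d then int (snd p i) - ((int (snd p d) * WW + int (fst p)) * w i) div WW else 0)"

lemma sum_Suc_d: "(\<Sum>i<Suc d. f i) = (\<Sum>i<d. f i) + f d" by simp

lemma phi_in: assumes z: "z \<in> LL t" shows "phi t z \<in> TT t" and "psi (phi t z) = z"
proof -
  define s where "s = (\<Sum>i<d. z i)"
  define k where "k = int t - s"
  have k0: "0 \<le> k" using z unfolding LL_def k_def s_def by auto
  have Wp: "0 < WW" using WW_pos by simp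
  have zi: "0 \<le> z i + (k * w i) div WW" if "i < d" for i
  proof -
    have "0 \<le> WW * z i + w i * k" using z that unfolding LL_def k_def s_def by auto
    then show ?thesis using div_shift[OF Wp, of "z i" "k * w i"] by (simp add: mult.commute)
  qed
  have zo: "z i = 0" if "i \<ge> d" for i using z that unfolding LL_def zvec_def by auto
  define r where "r = k mod WW"
  define q where "q = k div WW"
  have kqr: "k = q * WW + r" unfolding q_def r_def by (simp add: div_mult_mod_eq)
  have r0: "0 \<le> r" "r < WW" unfolding r_def using Wp by auto
  have q0: "0 \<le> q" unfolding q_def using k0 Wp by (simp add: pos_imp_zdiv_nonneg_iff)
  have ph: "phi t z = (nat r, \<lambda>i. if i < d then nat (z i + (k * w i) div WW) else if i = d then nat q else 0)"
    unfolding phi_def Let_def k_def s_def r_def q_def by simp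
  define Y where "Y = (\<lambda>i. if i < d then nat (z i + (k * w i) div WW) else if i = d then nat q else 0)"
  have sumY: "int (\<Sum>i<Suc d. Y i) = int t - hh r"
  proof -
    have "int (\<Sum>i<Suc d. Y i) = (\<Sum>i<d. int (Y i)) + int (Y d)" by simp
    also have "(\<Sum>i<d. int (Y i)) = (\<Sum>i<d. z i + (k * w i) div WW)"
      by (intro sum.cong) (use zi in \<open>auto simp: Y_def\<close>)
    also have "\<dots> = s + FF k" unfolding s_def FF_def by (simp add: sum.distrib)
    also have "int (Y d) = q" unfolding Y_def using q0 by simp
    finally have "int (\<Sum>i<Suc d. Y i) = s + FF k + q" .
    also have "FF k = q * (WW - 1) + FF r" unfolding kqr by (rule FF_decomp)
    finally show ?thesis unfolding hh_def k_def using kqr k_def by (simp add: algebra_simps)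
  qed
  have sY: "(\<Sum>i<Suc d. Y i) = nat (int t - hh r)" by (metis sumY nat_int)
  have "Y \<in> cset (Suc d) (nat (int t - hh r))"
    unfolding cset_def using sY by (auto simp: Y_def)
  moreover have "hh r \<le> int t" using sumY by linarith
  moreover have "nat r < nat WW" using r0 by simp
  ultimately show "phi t z \<in> TT t" unfolding TT_def ph Y_def[symmetric] using r0 by simp
  show "psi (phi t z) = z"
  proof
    fix i
    show "psi (phi t z) i = z i"
    proof (cases "i < d")
      case True
      have "(int (nat q) * WW + int (nat r)) = k" using q0 r0 kqr by simp
      then show ?thesis unfolding psi_def ph using True zi[OF True] by simp
    next
      case False then show ?thesis unfolding psi_def using zo by simp
    qed
  qed
qed

lemma psi_in: assumes p: "p \<in> TT t" shows "psi p \<in> LL t" and "phi t (psi p) = p"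
proof -
  obtain r Y where p_eq: "p = (r, Y)" by (cases p)
  have r: "r < nat WW" and h: "hh (int r) \<le> int t" and Y: "Y \<in> cset (Suc d) (nat (int t - hh (int r)))"
    using p unfolding TT_def p_eq by (auto split: if_splits)
  have Wp: "0 < WW" using WW_pos by simp
  define k where "k = int (Y d) * WW + int r"
  have k0: "0 \<le> k" unfolding k_def using Wp by simp
  define z where "z = psi p"
  have zd: "z i = (if i < d then int (Y i) - (k * w i) div WW else 0)" for i
    unfolding z_def psi_def p_eq k_def by simp
  have sY: "(\<Sum>i<d. int (Y i)) + int (Y d) = int t - hh (int r)"
  proof -
    have "(\<Sum>i<Suc d. Y i) = nat (int t - hh (int r))" using Y unfolding cset_def by simp
    then have "int (\<Sum>i<Suc d. Y i) = int t - hh (int r)" using h by simp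
    then show ?thesis by simp
  qed
  have sz: "(\<Sum>i<d. z i) = (\<Sum>i<d. int (Y i)) - FF k"
    unfolding zd FF_def by (simp add: sum_subtractf)
  have FFk: "FF k = int (Y d) * (WW - 1) + FF (int r)" unfolding k_def by (rule FF_decomp)
  have tk: "int t - (\<Sum>i<d. z i) = k"
    using sY sz FFk unfolding hh_def k_def by (simp add: algebra_simps)
  have zv: "z \<in> zvec d" unfolding zvec_def using zd by simp
  have "0 \<le> WW * z i + w i * (int t - (\<Sum>i<d. z i))" if i: "i < d" for i
  proof -
    have "0 \<le> z i + (k * w i) div WW" using i zd by simp
    then show ?thesis unfolding tk using div_shift[OF Wp, of "z i" "k * w i"] by (simp add: mult.commute)
  qed
  then show "psi p \<in> LL t" unfolding z_def[symmetric] LL_def using zv tk k0 by auto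
  have rr: "int r mod WW = int r" "int r div WW = 0" using r by auto
  have "phi t z = (nat (k mod WW), \<lambda>i. if i < d then nat (z i + (k * w i) div WW) else if i = d then nat (k div WW) else 0)"
    unfolding phi_def Let_def tk by simp
  also have "k mod WW = int r" unfolding k_def using rr by simp
  also have "k div WW = int (Y d)" unfolding k_def using rr Wp by simp
  also have "(\<lambda>i. if i < d then nat (z i + (k * w i) div WW) else if i = d then nat (int (Y d)) else 0) = Y"
  proof
    fix i
    show "(if i < d then nat (z i + (k * w i) div WW) else if i = d then nat (int (Y d)) else 0) = Y i"
      using Y unfolding cset_def by (auto simp: zd)
  qed
  finally show "phi t (psi p) = p" unfolding z_def p_eq by simp
qed

lemma card_LL: "card (LL t) = (\<Sum>r<nat WW. if hh (int r) \<le> int t then card (cset (Suc d) (nat (int t - hh (int r)))) else 0)"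
proof -
  have "bij_betw (phi t) (LL t) (TT t)"
    by (rule bij_betw_byWitness[where f' = psi]) (use phi_in psi_in in auto)
  then have "card (LL t) = card (TT t)" by (rule bij_betw_same_card)
  also have "\<dots> = (\<Sum>r<nat WW. card (if hh (int r) \<le> int t then cset (Suc d) (nat (int t - hh (int r))) else {}))"
    unfolding TT_def by (rule card_SigmaI) (auto simp: finite_cset)
  finally show ?thesis by (simp add: if_distrib cong: if_cong)
qed

definition hn :: "nat \<Rightarrow> nat" where "hn r = nat (hh (int r))"

lemma ehrhart_eq: "ehrhart_series d VV = (\<Sum>r<nat WW. fps_X ^ hn r) * Cser (Suc d)"
proof (rule fps_ext)
  fix t
  have E: "ehrhart_series d VV $ t = int (card (LL t))"
    unfolding ehrhart_series_def using lattice_count_eq LL_0 by simp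
  have "((\<Sum>r<nat WW. fps_X ^ hn r) * Cser (Suc d)) $ t = (\<Sum>r<nat WW. (fps_X ^ hn r * Cser (Suc d)) $ t)"
    by (simp add: sum_distrib_right fps_sum_nth)
  also have "\<dots> = (\<Sum>r<nat WW. int (if hh (int r) \<le> int t then card (cset (Suc d) (nat (int t - hh (int r)))) else 0))"
  proof (intro sum.cong refl)
    fix r
    have hp: "0 \<le> hh (int r)" by (rule hh_nonneg) simp
    show "(fps_X ^ hn r * Cser (Suc d)) $ t = int (if hh (int r) \<le> int t then card (cset (Suc d) (nat (int t - hh (int r)))) else 0)"
      unfolding fps_X_power_mult_nth Cser_def hn_def using hp
      by (auto simp: nat_diff_distrib' le_nat_iff)
  qed
  also have "\<dots> = int (card (LL t))" unfolding card_LL by (simp add: of_nat_sum)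
  finally show "ehrhart_series d VV $ t = ((\<Sum>r<nat WW. fps_X ^ hn r) * Cser (Suc d)) $ t" using E by simp
qed

lemma hstar_eq: "hstar d VV k = int (card {r \<in> {..<nat WW}. hn r = k})"
proof -
  have "(1 - fps_X) ^ (d + 1) * ehrhart_series d VV = (\<Sum>r<nat WW. fps_X ^ hn r) * ((1 - fps_X) ^ Suc d * Cser (Suc d))"
    unfolding ehrhart_eq by (simp add: algebra_simps)
  also have "\<dots> = (\<Sum>r<nat WW. fps_X ^ hn r)" using Cser_inv[of "Suc d"] by simp
  finally have "hstar d VV k = (\<Sum>r<nat WW. (fps_X ^ hn r :: int fps) $ k)"
    unfolding hstar_def by (simp add: fps_sum_nth)
  also have "\<dots> = (\<Sum>r<nat WW. if hn r = k then 1 else 0)" by (intro sum.cong) auto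
  also have "\<dots> = int (card {r \<in> {..<nat WW}. hn r = k})"
    by (simp add: sum.If_cases Int_def)
  finally show ?thesis .
qed

end

fun Wc :: "nat \<Rightarrow> nat" where
  "Wc 0 = 3"
| "Wc (Suc i) = Wc i * (Wc i + 1)"

lemma Wc_ge3: "Wc i \<ge> 3"
proof (induction i)
  case (Suc i)
  have "Wc i * 1 \<le> Wc i * (Wc i + 1)" by (intro mult_le_mono2) simp
  then show ?case using Suc by simp
qed simp

lemma Wc_dvd3: "3 dvd Wc k"
proof (induction k)
  case (Suc k)
  then show ?case by (simp only: Wc.simps) (rule dvd_mult2)
qed simp

lemma Wc_dvd_s: "j < k \<Longrightarrow> (Wc j + 1) dvd Wc k"
proof (induction k)
  case 0 then show ?case by simp
next
  case (Suc k)
  show ?case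
  proof (cases "j = k")
    case True then show ?thesis by (simp only: Wc.simps) (rule dvd_triv_right)
  next
    case False
    then have "(Wc j + 1) dvd Wc k" using Suc by simp
    then show ?thesis by (simp only: Wc.simps) (rule dvd_mult2)
  qed
qed

lemma Wc_ident: "Wc k div 3 = (\<Sum>j<k. Wc k div (Wc j + 1)) + 1"
proof (induction k)
  case 0 then show ?case by simp
next
  case (Suc k)
  obtain c where c: "Wc k = 3 * c" using Wc_dvd3[of k] by (elim dvdE)
  have a: "Wc (Suc k) div 3 = (Wc k div 3) * (Wc k + 1)"
    unfolding Wc.simps c by simp
  have b: "Wc (Suc k) div (Wc j + 1) = (Wc k div (Wc j + 1)) * (Wc k + 1)" if jk: "j < k" for j
  proof -
    obtain e where e: "Wc k = (Wc j + 1) * e" using Wc_dvd_s[OF jk] by (elim dvdE)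
    have e1: "Wc k * (Wc k + 1) = (Wc j + 1) * (e * (Wc k + 1))" using e by (simp only: mult.assoc)
    have e2: "Wc k div (Wc j + 1) = e" by (simp only: e) (rule nonzero_mult_div_cancel_left, simp)
    have e3: "(Wc j + 1) * (e * (Wc k + 1)) div (Wc j + 1) = e * (Wc k + 1)"
      by (rule nonzero_mult_div_cancel_left) simp
    show ?thesis unfolding Wc.simps e1 e3 e2 ..
  qed
  have sk: "Wc (Suc k) div (Wc k + 1) = Wc k" unfolding Wc.simps by (rule nonzero_mult_div_cancel_right) simp
  have "(\<Sum>j<Suc k. Wc (Suc k) div (Wc j + 1)) = (\<Sum>j<k. Wc (Suc k) div (Wc j + 1)) + Wc (Suc k) div (Wc k + 1)"
    by (rule sum.lessThan_Suc)
  also have "(\<Sum>j<k. Wc (Suc k) div (Wc j + 1)) = (\<Sum>j<k. (Wc k div (Wc j + 1)) * (Wc k + 1))"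
    by (intro sum.cong refl b) simp
  also have "\<dots> = (\<Sum>j<k. Wc k div (Wc j + 1)) * (Wc k + 1)" by (rule sum_distrib_right[symmetric])
  finally have "(\<Sum>j<Suc k. Wc (Suc k) div (Wc j + 1)) = (\<Sum>j<k. Wc k div (Wc j + 1)) * (Wc k + 1) + Wc k"
    unfolding sk .
  then show ?case unfolding a Suc by (simp add: algebra_simps)
qed

lemma sum_split_add: fixes a b :: nat shows "(\<Sum>i<a + b. f i) = (\<Sum>i<a. f i) + (\<Sum>i<b. f (a + i))"
  by (induction b) (simp_all add: algebra_simps)

lemma sum_Suc_shift: fixes n :: nat shows "(\<Sum>i<Suc n. f i) = f 0 + (\<Sum>i<n. f (Suc i))"
  by (induction n) (simp_all add: algebra_simps)

lemma sum_double: "(\<Sum>i<2 * k. f (i div 2)) = 2 * (\<Sum>j<k. f j)"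
  for f :: "nat \<Rightarrow> 'a::comm_semiring_1"
proof (induction k)
  case 0 then show ?case by simp
next
  case (Suc k)
  have e: "2 * Suc k = Suc (Suc (2 * k))" by simp
  have d1: "Suc (2 * k) div 2 = k" and d0: "(2 * k) div 2 = k" by simp_all
  have "(\<Sum>i<2 * Suc k. f (i div 2)) = (\<Sum>i<2 * k. f (i div 2)) + f ((2 * k) div 2) + f (Suc (2 * k) div 2)"
    unfolding e sum.lessThan_Suc by simp
  also have "\<dots> = 2 * (\<Sum>j<k. f j) + f k + f k" unfolding d1 d0 Suc ..
  also have "\<dots> = 2 * (\<Sum>j<Suc k. f j)" by (simp add: distrib_left mult_2 add_ac)
  finally show ?case .
qed

definition wt :: "nat \<Rightarrow> nat \<Rightarrow> nat \<Rightarrow> int" where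
  "wt k K i = (if i < 2 * k then int (K * Wc k div (Wc (i div 2) + 1))
     else if i = 2 * k then int (K * Wc k div 3)
     else if i < 2 * k + 2 * K then 1 else 0)"

lemma KM_div_s: assumes jk: "j < k" shows "K * Wc k div (Wc j + 1) = K * (Wc k div (Wc j + 1))"
  using div_mult_swap[OF Wc_dvd_s[OF jk], of K] by simp

lemma KM_div_3: "K * Wc k div 3 = K * (Wc k div 3)"
  using div_mult_swap[OF Wc_dvd3[of k], of K] by simp

lemma wt_sum:
  assumes K: "K \<ge> 1"
  shows "1 + (\<Sum>i<2 * k + 2 * K. wt k K i) = int (K * Wc k)"
proof -
  let ?M = "Wc k"
  define S where "S = (\<Sum>j<k. ?M div (Wc j + 1))"
  have A: "(\<Sum>i<2 * k. wt k K i) = 2 * int (K * S)"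
  proof -
    have "(\<Sum>i<2 * k. wt k K i) = (\<Sum>i<2 * k. int (K * ?M div (Wc (i div 2) + 1)))"
      by (intro sum.cong refl) (simp add: wt_def)
    also have "\<dots> = 2 * (\<Sum>j<k. int (K * ?M div (Wc j + 1)))"
      by (rule sum_double[where f = "\<lambda>j. int (K * ?M div (Wc j + 1))"])
    also have "(\<Sum>j<k. int (K * ?M div (Wc j + 1))) = (\<Sum>j<k. int K * int (?M div (Wc j + 1)))"
      by (intro sum.cong refl) (metis KM_div_s lessThan_iff of_nat_mult)
    also have "\<dots> = int (K * S)" unfolding S_def by (simp add: sum_distrib_left)
    finally show ?thesis .
  qed
  obtain K' where K': "K = Suc K'" using K by (cases K) auto
  have B: "(\<Sum>i<2 * K. wt k K (2 * k + i)) = int (K * (?M div 3)) + (2 * int K - 1)"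
  proof -
    have e2: "2 * K = Suc (Suc (2 * K'))" using K' by simp
    have "(\<Sum>i<2 * K. wt k K (2 * k + i)) = wt k K (2 * k) + (\<Sum>i<Suc (2 * K'). wt k K (2 * k + Suc i))"
      unfolding e2 using sum_Suc_shift[of "\<lambda>i. wt k K (2 * k + i)" "Suc (2 * K')"] by simp
    also have "(\<Sum>i<Suc (2 * K'). wt k K (2 * k + Suc i)) = (\<Sum>i<Suc (2 * K'). 1)"
      by (intro sum.cong refl) (simp add: wt_def K')
    also have "wt k K (2 * k) = int (K * (?M div 3))" by (simp add: wt_def KM_div_3)
    finally show ?thesis using K' by simp
  qed
  have S3: "S + 1 = ?M div 3" unfolding S_def using Wc_ident[of k] by simp
  have M3: "3 * (?M div 3) = ?M" using Wc_dvd3[of k] by simp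
  have "1 + (\<Sum>i<2 * k + 2 * K. wt k K i) = 1 + 2 * int (K * S) + int (K * (?M div 3)) + (2 * int K - 1)"
    unfolding sum_split_add A B by simp
  also have "\<dots> = int K * (3 * (int S + 1))"
  proof -
    have "int (?M div 3) = int S + 1" using S3 by linarith
    then show ?thesis by (simp add: algebra_simps)
  qed
  also have "int S + 1 = int (?M div 3)" using S3 by linarith
  also have "int K * (3 * int (?M div 3)) = int (K * ?M)" using M3 by (metis of_nat_mult of_nat_numeral)
  finally show ?thesis .
qed

lemma wt_pos: assumes K: "K \<ge> 1" and i: "i < 2 * k + 2 * K" shows "wt k K i \<ge> 1"
proof -
  have s: "Wc k div (Wc j + 1) \<ge> 1" if jk: "j < k" for j
  proof -
    obtain c where c: "Wc k = (Wc j + 1) * c" using Wc_dvd_s[OF jk] by (elim dvdE)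
    have "c \<noteq> 0"
    proof
      assume "c = 0" then have "Wc k = 0" using c by simp
      then show False using Wc_ge3[of k] by simp
    qed
    moreover have "Wc k div (Wc j + 1) = c" unfolding c by (rule nonzero_mult_div_cancel_left) simp
    ultimately show ?thesis by simp
  qed
  have t: "Wc k div 3 \<ge> 1" using Wc_ge3[of k] by simp
  show ?thesis
  proof (cases "i < 2 * k")
    case True
    then have "i div 2 < k" by simp
    then have h: "K * (Wc k div (Wc (i div 2) + 1)) \<ge> 1" using s K by simp
    show ?thesis unfolding wt_def if_P[OF True] KM_div_s[OF \<open>i div 2 < k\<close>]
      using h by (metis of_nat_le_iff of_nat_1)
  next
    case False
    have "K * (Wc k div 3) \<ge> 1" using t K by simp
    then have "int K * int (Wc k div 3) \<ge> 1" by (metis of_nat_le_iff of_nat_1 of_nat_mult)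
    then show ?thesis using i False by (simp add: wt_def KM_div_3)
  qed
qed

lemma wt_dvd: assumes K: "K \<ge> 1" and i: "i < 2 * k + 2 * K" shows "wt k K i dvd int (K * Wc k)"
proof -
  have a: "int (K * Wc k div (Wc j + 1)) dvd int (K * Wc k)" if jk: "j < k" for j
  proof -
    have "(Wc j + 1) dvd K * Wc k" using Wc_dvd_s[OF jk] by simp
    then have "K * Wc k = (Wc j + 1) * (K * Wc k div (Wc j + 1))" by (rule dvd_mult_div_cancel[symmetric])
    then have "K * Wc k div (Wc j + 1) dvd K * Wc k" by (metis dvd_triv_right)
    then show ?thesis by (simp only: of_nat_dvd_iff)
  qed
  have b: "int (K * Wc k div 3) dvd int (K * Wc k)"
  proof -
    have "3 dvd K * Wc k" using Wc_dvd3[of k] by simp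
    then have "K * Wc k = 3 * (K * Wc k div 3)" by (rule dvd_mult_div_cancel[symmetric])
    then have "K * Wc k div 3 dvd K * Wc k" by (metis dvd_triv_right)
    then show ?thesis by (simp only: of_nat_dvd_iff)
  qed
  show ?thesis
  proof (cases "i < 2 * k")
    case True then show ?thesis using a[of "i div 2"] by (simp add: wt_def)
  next
    case False then show ?thesis using b i by (simp add: wt_def)
  qed
qed

lemma wsimplex_wt: assumes K: "K \<ge> 1" shows "wsimplex (2 * k + 2 * K) (wt k K)"
proof
  fix i
  show "i < 2 * k + 2 * K \<Longrightarrow> 1 \<le> wt k K i" using wt_pos[OF K] by simp
  show "2 * k + 2 * K \<le> i \<Longrightarrow> wt k K i = 0" using K by (simp add: wt_def)
  show "i < 2 * k + 2 * K \<Longrightarrow> wt k K i dvd 1 + (\<Sum>j<2 * k + 2 * K. wt k K j)"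
    using wt_dvd[OF K] wt_sum[OF K] by simp
qed


definition hb :: "nat \<Rightarrow> int \<Rightarrow> int" where
  "hb k v = v - v div 3 - 2 * (\<Sum>j<k. v div int (Wc j + 1))"

lemma div_shift_dvd:
  fixes u v :: int and s M :: nat
  assumes "s dvd M" "s > 0"
  shows "(u * int M + v) div int s = u * int (M div s) + v div int s"
proof -
  obtain c where c: "M = s * c" using assms(1) by (elim dvdE)
  have ic: "int M = int s * int c" using c by simp
  have e1: "u * int M + v = v + (u * int c) * int s" unfolding ic by (simp add: algebra_simps)
  have "(v + (u * int c) * int s) div int s = v div int s + u * int c" using assms(2) by simp
  then have "(u * int M + v) div int s = v div int s + u * int c" unfolding e1 .
  moreover have "M div s = c" unfolding c using assms(2) by simp
  ultimately show ?thesis by simp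
qed

lemma hb_shift: "hb k (u * int (Wc k) + v) = 2 * u + hb k v"
proof -
  let ?M = "Wc k"
  have s: "(u * int ?M + v) div int (Wc j + 1) = u * int (?M div (Wc j + 1)) + v div int (Wc j + 1)" if "j < k" for j
    by (rule div_shift_dvd) (use Wc_dvd_s[OF that] in auto)
  have t: "(u * int ?M + v) div 3 = u * int (?M div 3) + v div 3"
    using div_shift_dvd[OF Wc_dvd3[of k], of u v] by simp
  have "(\<Sum>j<k. (u * int ?M + v) div int (Wc j + 1)) = (\<Sum>j<k. u * int (?M div (Wc j + 1)) + v div int (Wc j + 1))"
    by (intro sum.cong refl s) simp
  also have "\<dots> = (\<Sum>j<k. u * int (?M div (Wc j + 1))) + (\<Sum>j<k. v div int (Wc j + 1))"
    by (rule sum.distrib)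
  also have "(\<Sum>j<k. u * int (?M div (Wc j + 1))) = u * int (\<Sum>j<k. ?M div (Wc j + 1))"
    by (simp only: sum_distrib_left[symmetric] of_nat_sum)
  also have "(\<Sum>j<k. ?M div (Wc j + 1)) = ?M div 3 - 1" using Wc_ident[of k] by simp
  finally have S: "(\<Sum>j<k. (u * int ?M + v) div int (Wc j + 1)) = u * int (?M div 3 - 1) + (\<Sum>j<k. v div int (Wc j + 1))" .
  have M3: "int ?M = 3 * int (?M div 3)" using Wc_dvd3[of k] by (metis dvd_mult_div_cancel of_nat_mult of_nat_numeral)
  have T1: "int (?M div 3 - 1) = int (?M div 3) - 1" using Wc_ge3[of k] by (simp add: of_nat_diff)
  show ?thesis unfolding hb_def S t T1 by (subst M3) (simp add: algebra_simps)
qed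

lemma mod2_aux: "(2 * (x::int) + y) mod 2 = y mod 2" by presburger

lemma hb_parity: "hb k v mod 2 = (v mod 3) mod 2"
proof -
  have "v = 3 * (v div 3) + v mod 3" by simp
  define X where "X = v div 3 - (\<Sum>j<k. v div int (Wc j + 1))"
  then have "hb k v = 2 * X + v mod 3"
    unfolding hb_def X_def using \<open>v = _\<close> by (simp add: algebra_simps)
  then have "hb k v mod 2 = (2 * X + v mod 3) mod 2" by (simp only:)
  also have "\<dots> = (v mod 3) mod 2" by (rule mod2_aux)
  finally show ?thesis .
qed

lemma recip_ident: "(\<Sum>j<k. 1 / real (Wc j + 1)) = 1 / 3 - 1 / real (Wc k)"
proof -
  let ?M = "Wc k"
  have Mp: "real ?M > 0" using Wc_ge3[of k] by simp
  have a: "real (?M div (Wc j + 1)) = real ?M / real (Wc j + 1)" if "j < k" for j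
    by (rule real_of_nat_div[OF Wc_dvd_s[OF that]])
  have b: "real (?M div 3) = real ?M / 3" using real_of_nat_div[OF Wc_dvd3[of k]] by simp
  have "real (?M div 3) = (\<Sum>j<k. real (?M div (Wc j + 1))) + 1"
    using Wc_ident[of k] by (metis of_nat_1 of_nat_add of_nat_sum)
  moreover have "(\<Sum>j<k. real (?M div (Wc j + 1))) = (\<Sum>j<k. real ?M / real (Wc j + 1))"
    by (intro sum.cong refl a) simp
  moreover have "(\<Sum>j<k. real ?M / real (Wc j + 1)) = real ?M * (\<Sum>j<k. 1 / real (Wc j + 1))"
    by (simp add: sum_distrib_left)
  ultimately have "real ?M / 3 = real ?M * (\<Sum>j<k. 1 / real (Wc j + 1)) + 1" using b by linarith
  then show ?thesis using Mp by (simp add: field_simps)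
qed

lemma hb_upper:
  assumes v: "0 \<le> v" "v < int (Wc k)"
  shows "hb k v \<le> 2 * int k + 2"
proof -
  let ?M = "Wc k"
  have Mp: "real ?M > 0" using Wc_ge3[of k] by simp
  have fl: "real_of_int (v div int s) \<ge> v / s - 1" if "s > 0" for s :: nat
  proof -
    have "v = int s * (v div int s) + v mod int s" by simp
    moreover have "v mod int s < int s" using that by simp
    ultimately have "real_of_int v < real s * real_of_int (v div int s) + real s"
      by (metis of_int_add of_int_less_iff of_int_mult of_int_of_nat_eq add_strict_left_mono)
    then show ?thesis using that by (simp add: field_simps)
  qed
  have "real_of_int (hb k v) = v - real_of_int (v div 3) - 2 * (\<Sum>j<k. real_of_int (v div int (Wc j + 1)))"
    unfolding hb_def by simp
  also have "\<dots> \<le> v - (v / 3 - 1) - 2 * (\<Sum>j<k. (v / real (Wc j + 1) - 1))"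
  proof -
    have "(\<Sum>j<k. (v / real (Wc j + 1) - 1)) \<le> (\<Sum>j<k. real_of_int (v div int (Wc j + 1)))"
      by (intro sum_mono) (use fl in \<open>metis add_gr_0 of_nat_Suc zero_less_one\<close>)
    moreover have "real_of_int (v div 3) \<ge> v / 3 - 1" using fl[of 3] by simp
    ultimately show ?thesis by simp
  qed
  also have "\<dots> = v * (2 / 3 - 2 * (\<Sum>j<k. 1 / real (Wc j + 1))) + 1 + 2 * k"
    by (simp add: sum_subtractf sum_divide_distrib[symmetric] algebra_simps sum_distrib_left)
  also have "\<dots> = 2 * v / ?M + 1 + 2 * k" unfolding recip_ident by (simp add: algebra_simps)
  also have "\<dots> < 3 + 2 * k"
  proof -
    have "v / ?M < 1" using v Mp by (simp add: field_simps)
    then show ?thesis by simp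
  qed
  finally have "real_of_int (hb k v) < real (3 + 2 * k)" .
  then have "real_of_int (hb k v) < 3 + 2 * real k" by simp
  then show ?thesis by linarith
qed


lemma div_cancel_dvd:
  fixes r :: int and N s :: nat
  assumes "s dvd N" "N > 0"
  shows "(r * int (N div s)) div int N = r div int s"
proof -
  obtain c where c: "N = s * c" using assms(1) by (elim dvdE)
  have c0: "c \<noteq> 0" using c assms(2) by auto
  have s0: "s \<noteq> 0" using c assms(2) by auto
  have "N div s = c" unfolding c using s0 by simp
  then have "(r * int (N div s)) div int N = (r * int c) div (int s * int c)" unfolding c by simp
  also have "\<dots> = r div int s" using c0 by simp
  finally show ?thesis .
qed

locale cons =
  fixes k K :: nat
  assumes K1: "K \<ge> 1"

sublocale cons \<subseteq> wsimplex "2 * k + 2 * K" "wt k K"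
  by (rule wsimplex_wt[OF K1])

context cons
begin

lemma WW_eq: "WW = int (K * Wc k)"
  unfolding WW_def using wt_sum[OF K1] by simp

lemma KM_pos: "K * Wc k > 0" using K1 Wc_ge3[of k] by simp

lemma FF_wt:
  assumes r: "0 \<le> r" "r < int (K * Wc k)"
  shows "FF r = r div 3 + 2 * (\<Sum>j<k. r div int (Wc j + 1))"
proof -
  let ?N = "K * Wc k"
  have A: "(\<Sum>i<2 * k. (r * wt k K i) div WW) = 2 * (\<Sum>j<k. r div int (Wc j + 1))"
  proof -
    have "(\<Sum>i<2 * k. (r * wt k K i) div WW) = (\<Sum>i<2 * k. r div int (Wc (i div 2) + 1))"
    proof (intro sum.cong refl)
      fix i assume "i \<in> {..<2 * k}"
      then have i: "i < 2 * k" "i div 2 < k" by auto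
      have "(Wc (i div 2) + 1) dvd ?N" using Wc_dvd_s[OF i(2)] by simp
      then show "(r * wt k K i) div WW = r div int (Wc (i div 2) + 1)"
        unfolding WW_eq wt_def if_P[OF i(1)] by (rule div_cancel_dvd[OF _ KM_pos])
    qed
    also have "\<dots> = 2 * (\<Sum>j<k. r div int (Wc j + 1))"
      by (rule sum_double[where f = "\<lambda>j. r div int (Wc j + 1)"])
    finally show ?thesis .
  qed
  obtain K' where K': "K = Suc K'" using K1 by (cases K) auto
  have B: "(\<Sum>i<2 * K. (r * wt k K (2 * k + i)) div WW) = r div 3"
  proof -
    have e2: "2 * K = Suc (Suc (2 * K'))" using K' by simp
    define f where "f i = (r * wt k K (2 * k + i)) div WW" for i
    have "(\<Sum>i<2 * K. (r * wt k K (2 * k + i)) div WW) = (\<Sum>i<Suc (Suc (2 * K')). f i)"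
      unfolding f_def e2 ..
    also have "\<dots> = f 0 + (\<Sum>i<Suc (2 * K'). f (Suc i))" by (rule sum_Suc_shift)
    also have "f 0 = (r * wt k K (2 * k)) div WW" unfolding f_def by simp
    also have "(\<Sum>i<Suc (2 * K'). f (Suc i)) = (\<Sum>i<Suc (2 * K'). (r * wt k K (2 * k + Suc i)) div WW)"
      unfolding f_def ..
    also have "(\<Sum>i<Suc (2 * K'). (r * wt k K (2 * k + Suc i)) div WW) = (\<Sum>i<Suc (2 * K'). 0)"
    proof (intro sum.cong refl)
      fix i assume "i \<in> {..<Suc (2 * K')}"
      then have "wt k K (2 * k + Suc i) = 1" by (simp add: wt_def K')
      then show "(r * wt k K (2 * k + Suc i)) div WW = 0" unfolding WW_eq using r by simp
    qed
    also have "(r * wt k K (2 * k)) div WW = r div 3"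
    proof -
      have "3 dvd ?N" using Wc_dvd3[of k] by simp
      then have "(r * int (?N div 3)) div int ?N = r div int 3" by (rule div_cancel_dvd[OF _ KM_pos])
      then show ?thesis unfolding WW_eq by (simp add: wt_def)
    qed
    finally show ?thesis by simp
  qed
  show ?thesis unfolding FF_def sum_split_add A B by simp
qed

lemma hh_hb: "0 \<le> r \<Longrightarrow> r < int (K * Wc k) \<Longrightarrow> hh r = hb k r"
  unfolding hh_def hb_def using FF_wt by simp

lemma hb_nonneg: "0 \<le> v \<Longrightarrow> v < int (Wc k) \<Longrightarrow> 0 \<le> hb k v"
proof -
  assume v: "0 \<le> v" "v < int (Wc k)"
  have "Wc k \<le> K * Wc k" using K1 by simp
  then have "v < int (K * Wc k)" using v by linarith
  then show ?thesis using hh_hb[OF v(1)] hh_nonneg[OF v(1)] by simp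
qed

lemma count_A:
  assumes j1: "2 * k + 2 \<le> j" and j2: "j + 2 \<le> 2 * K"
  shows "card {r \<in> {..<nat WW}. hn r = j} = card {v. v < Wc k \<and> (v mod 3) mod 2 = j mod 2}"
proof -
  let ?M = "Wc k"
  have Mp: "?M > 0" using Wc_ge3[of k] by simp
  define g where "g v = nat ((int j - hb k (int v)) div 2) * ?M + v" for v
  have nWW: "nat WW = K * ?M" unfolding WW_eq nat_int ..
  have decomp: "hh (int r) = 2 * int (r div ?M) + hb k (int (r mod ?M))" if r: "r < K * ?M" for r
  proof -
    have "int r = int (r div ?M) * int ?M + int (r mod ?M)"
      by (metis div_mult_mod_eq of_nat_add of_nat_mult)
    then have "hb k (int r) = 2 * int (r div ?M) + hb k (int (r mod ?M))" using hb_shift by metis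
    moreover have "hh (int r) = hb k (int r)" using r by (intro hh_hb) (simp_all only: of_nat_less_iff of_nat_0_le_iff)
    ultimately show ?thesis by simp
  qed
  have bij: "bij_betw g {v. v < ?M \<and> (v mod 3) mod 2 = j mod 2} {r \<in> {..<nat WW}. hn r = j}"
  proof (rule bij_betw_byWitness[where f' = "\<lambda>r. r mod ?M"])
    show "\<forall>v\<in>{v. v < ?M \<and> (v mod 3) mod 2 = j mod 2}. g v mod ?M = v"
      unfolding g_def by simp
    show "\<forall>r\<in>{r \<in> {..<nat WW}. hn r = j}. g (r mod ?M) = r"
    proof
      fix r assume "r \<in> {r \<in> {..<nat WW}. hn r = j}"
      then have r: "r < K * ?M" "nat (hh (int r)) = j" unfolding nWW hn_def by auto
      have "hh (int r) = int j" using r(2) hh_nonneg[of "int r"] by simp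
      then have "int j - hb k (int (r mod ?M)) = 2 * int (r div ?M)" using decomp[OF r(1)] by simp
      then have "nat ((int j - hb k (int (r mod ?M))) div 2) = r div ?M" by simp
      then show "g (r mod ?M) = r" unfolding g_def by simp
    qed
    show "g ` {v. v < ?M \<and> (v mod 3) mod 2 = j mod 2} \<subseteq> {r \<in> {..<nat WW}. hn r = j}"
    proof
      fix r assume "r \<in> g ` {v. v < ?M \<and> (v mod 3) mod 2 = j mod 2}"
      then obtain v where v: "v < ?M" "(v mod 3) mod 2 = j mod 2" "r = g v" by auto
      define h where "h = hb k (int v)"
      have h0: "0 \<le> h" unfolding h_def using v(1) by (intro hb_nonneg) auto
      have h1: "h \<le> 2 * int k + 2" unfolding h_def using v(1) by (intro hb_upper) auto
      have hp: "h mod 2 = int j mod 2"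
      proof -
        have "h mod 2 = (int v mod 3) mod 2" unfolding h_def by (rule hb_parity)
        also have "\<dots> = int ((v mod 3) mod 2)" by (simp add: zmod_int)
        also have "\<dots> = int (j mod 2)" using v(2) by simp
        finally show ?thesis by (simp add: zmod_int)
      qed
      define u where "u = (int j - h) div 2"
      have u2: "2 * u = int j - h" unfolding u_def using hp by (metis dvd_mult_div_cancel mod_eq_dvd_iff)
      have u0: "0 \<le> u" using u2 h1 j1 by linarith
      have uK: "u < int K" using u2 h0 j2 by linarith
      have gv: "g v = nat u * ?M + v" unfolding g_def u_def h_def by simp
      have "nat u * ?M + v < K * ?M"
      proof -
        have "nat u + 1 \<le> K" using uK u0 by linarith
        then have "(nat u + 1) * ?M \<le> K * ?M" by (rule mult_le_mono1)
        then show ?thesis using v(1) by simp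
      qed
      moreover have "hh (int (nat u * ?M + v)) = int j"
      proof -
        have "hh (int (nat u * ?M + v)) = hb k (int (nat u * ?M + v))"
          using calculation by (intro hh_hb) (simp_all only: of_nat_less_iff of_nat_0_le_iff)
        also have "int (nat u * ?M + v) = u * int ?M + int v" using u0 by simp
        also have "hb k (u * int ?M + int v) = 2 * u + h" unfolding h_def by (rule hb_shift)
        finally show ?thesis using u2 u0 by simp
      qed
      ultimately show "r \<in> {r \<in> {..<nat WW}. hn r = j}" unfolding nWW hn_def v(3) gv by simp
    qed
    show "(\<lambda>r. r mod ?M) ` {r \<in> {..<nat WW}. hn r = j} \<subseteq> {v. v < ?M \<and> (v mod 3) mod 2 = j mod 2}"
    proof
      fix v assume "v \<in> (\<lambda>r. r mod ?M) ` {r \<in> {..<nat WW}. hn r = j}"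
      then obtain r where r: "r < K * ?M" "nat (hh (int r)) = j" "v = r mod ?M"
        unfolding nWW hn_def by auto
      have "hh (int r) = int j" using r(2) hh_nonneg[of "int r"] by simp
      then have e: "int j = 2 * int (r div ?M) + hb k (int v)" using decomp[OF r(1)] r(3) by simp
      have "int (j mod 2) = hb k (int v) mod 2"
      proof -
        have "int (j mod 2) = int j mod 2" by (simp add: zmod_int)
        also have "\<dots> = hb k (int v) mod 2" unfolding e using mod2_aux by simp
        finally show ?thesis .
      qed
      also have "hb k (int v) mod 2 = (int v mod 3) mod 2" by (rule hb_parity)
      also have "\<dots> = int ((v mod 3) mod 2)" by (simp add: zmod_int)
      finally have "(v mod 3) mod 2 = j mod 2" by simp
      moreover have "v < ?M" using r(3) Mp by simp
      ultimately show "v \<in> {v. v < ?M \<and> (v mod 3) mod 2 = j mod 2}" by simp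
    qed
  qed
  then show ?thesis by (rule bij_betw_same_card[symmetric])
qed

end

lemma count_mod3:
  "card {v. v < 3 * N \<and> P (v mod 3)} = N * card {\<rho>. \<rho> < 3 \<and> P \<rho>}"
proof -
  have "bij_betw (\<lambda>v. (v div 3, v mod 3)) {v. v < 3 * N \<and> P (v mod 3)} ({..<N} \<times> {\<rho>. \<rho> < 3 \<and> P \<rho>})"
  proof (rule bij_betw_byWitness[where f' = "\<lambda>(a, \<rho>). 3 * a + \<rho>"])
    show "\<forall>a\<in>{v. v < 3 * N \<and> P (v mod 3)}. (\<lambda>(a, \<rho>). 3 * a + \<rho>) (a div 3, a mod 3) = a" by simp
    show "\<forall>a'\<in>{..<N} \<times> {\<rho>. \<rho> < 3 \<and> P \<rho>}. (\<lambda>v. (v div 3, v mod 3)) ((\<lambda>(a, \<rho>). 3 * a + \<rho>) a') = a'"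
      by auto
    show "(\<lambda>v. (v div 3, v mod 3)) ` {v. v < 3 * N \<and> P (v mod 3)} \<subseteq> {..<N} \<times> {\<rho>. \<rho> < 3 \<and> P \<rho>}"
      by auto
    show "(\<lambda>(a, \<rho>). 3 * a + \<rho>) ` ({..<N} \<times> {\<rho>. \<rho> < 3 \<and> P \<rho>}) \<subseteq> {v. v < 3 * N \<and> P (v mod 3)}"
      by auto
  qed
  then have "card {v. v < 3 * N \<and> P (v mod 3)} = card ({..<N} \<times> {\<rho>. \<rho> < 3 \<and> P \<rho>})"
    by (rule bij_betw_same_card)
  then show ?thesis by (simp add: card_cartesian_product)
qed

lemma count_even: "card {v. v < 3 * N \<and> (v mod 3) mod 2 = 0} = 2 * N"
proof -
  have "{\<rho>::nat. \<rho> < 3 \<and> \<rho> mod 2 = 0} = {0, 2}" by auto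
  then show ?thesis using count_mod3[of N "\<lambda>\<rho>. \<rho> mod 2 = 0"] by simp
qed

lemma count_odd: "card {v. v < 3 * N \<and> (v mod 3) mod 2 = 1} = N"
proof -
  have "{\<rho>::nat. \<rho> < 3 \<and> \<rho> mod 2 = 1} = {1}" by (force simp: numeral_3_eq_3 less_Suc_eq)
  then show ?thesis using count_mod3[of N "\<lambda>\<rho>. \<rho> mod 2 = 1"] by simp
qed


context cons
begin

lemma hstar_val:
  assumes j1: "2 * k + 2 \<le> j" and j2: "j + 2 \<le> 2 * K"
  shows "hstar (2 * k + 2 * K) VV j = (if even j then 2 * int (Wc k div 3) else int (Wc k div 3))"
proof -
  have M: "Wc k = 3 * (Wc k div 3)" using Wc_dvd3[of k] by simp
  have "hstar (2 * k + 2 * K) VV j = int (card {v. v < Wc k \<and> (v mod 3) mod 2 = j mod 2})"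
    unfolding hstar_eq count_A[OF j1 j2] ..
  also have "\<dots> = int (card {v. v < 3 * (Wc k div 3) \<and> (v mod 3) mod 2 = j mod 2})"
    by (subst M) simp
  also have "\<dots> = (if even j then 2 * int (Wc k div 3) else int (Wc k div 3))"
  proof (cases "even j")
    case True then show ?thesis using count_even[of "Wc k div 3"] by simp
  next
    case False
    then have "j mod 2 = 1" by presburger
    then show ?thesis using count_odd[of "Wc k div 3"] False by simp
  qed
  finally show ?thesis .
qed

end

lemma Wc_growth: "3 ^ (2 ^ k) \<le> Wc k"
proof (induction k)
  case 0 then show ?case by simp
next
  case (Suc k)
  have "(3::nat) ^ (2 ^ Suc k) = 3 ^ (2 ^ k) * 3 ^ (2 ^ k)" by (simp add: power_add[symmetric] mult_2)
  also have "\<dots> \<le> Wc k * Wc k" using Suc by (intro mult_le_mono) auto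
  also have "\<dots> \<le> Wc k * (Wc k + 1)" by simp
  finally show ?case by simp
qed

lemma ln_lower: "0 < x \<Longrightarrow> 1 - 1 / x \<le> ln (x::real)"
proof -
  assume x: "0 < x"
  have "ln (1 / x) \<le> 1 / x - 1" using x by (intro ln_le_minus_one) simp
  then show ?thesis using x by (simp add: ln_div)
qed

lemma lnln3: "ln (ln (3::real)) \<ge> 8 / 100"
proof -
  have e: "exp 1 < (272/100::real)" by (rule e_less_272)
  have "ln (3 / exp 1) \<ge> 1 - exp 1 / (3::real)" using ln_lower[of "3 / exp 1"] by simp
  moreover have "ln (3 / exp 1) = ln (3::real) - 1" by (simp add: ln_div)
  ultimately have l3: "ln (3::real) \<ge> 109 / 100" using e by simp
  have "ln (ln (3::real)) \<ge> 1 - 1 / ln 3" using ln_lower[of "ln 3"] l3 by simp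
  moreover have "1 / ln (3::real) \<le> 100 / 109" using l3 by (simp add: field_simps)
  ultimately show ?thesis by simp
qed

lemma pow3_ge: assumes n: "n \<ge> 1" "ln (real n) \<le> real x" shows "n \<le> 3 ^ x"
proof -
  have "real n = exp (ln (real n))" using n by simp
  also have "\<dots> \<le> exp (real x)" by (rule exp_mono[OF n(2)])
  also have "exp (real x) = exp 1 ^ x" using exp_of_nat_mult[of x 1] by simp
  also have "\<dots> \<le> 3 ^ x" by (intro power_mono) (use exp_le in auto)
  finally have "real n \<le> real (3 ^ x)" by simp
  then show ?thesis by (simp only: of_nat_le_iff)
qed

definition kk :: "nat \<Rightarrow> nat" where "kk n = nat \<lceil>log 2 (1 + ln (real n))\<rceil>"

lemma kk_big: assumes n: "n \<ge> 1" shows "n \<le> Wc (kk n) div 3"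
proof -
  define y where "y = log 2 (1 + ln (real n))"
  have l0: "ln (real n) \<ge> 0" using n by simp
  have y0: "y \<ge> 0" unfolding y_def using l0 by simp
  have rk: "real (kk n) = real_of_int \<lceil>y\<rceil>" unfolding kk_def y_def[symmetric] using y0 by simp
  have "1 + ln (real n) = 2 powr y" unfolding y_def using l0 by simp
  also have "\<dots> \<le> 2 powr real (kk n)" unfolding rk by simp
  also have "\<dots> = real (2 ^ kk n)" by (simp add: powr_realpow)
  finally have "ln (real n) \<le> real (2 ^ kk n - 1)"
    by (simp add: of_nat_diff)
  then have "n \<le> 3 ^ (2 ^ kk n - 1)" using pow3_ge n by blast
  then have "3 * n \<le> 3 * 3 ^ (2 ^ kk n - 1)" by simp
  also have "3 * 3 ^ (2 ^ kk n - 1) = (3::nat) ^ (2 ^ kk n)"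
    by (metis One_nat_def Suc_pred pos2 power_Suc zero_less_power)
  also have "\<dots> \<le> Wc (kk n)" by (rule Wc_growth)
  finally show ?thesis by simp
qed

lemma kk_small:
  assumes L: "ln (ln (real n)) > 0"
  shows "real (kk n) \<le> 2 + 2 * ln (ln (real n))"
proof -
  have n2: "n \<ge> 3"
  proof (rule ccontr)
    assume "\<not> n \<ge> 3"
    then have "n = 0 \<or> n = 1 \<or> n = 2" by auto
    moreover have "ln (ln (2::real)) \<le> 0"
    proof -
      have "ln (2::real) \<le> 1" using ln_le_minus_one[of 2] by simp
      moreover have "ln (2::real) > 0" by simp
      ultimately show ?thesis by simp
    qed
    ultimately show False using L by auto
  qed
  have ln1: "ln (real n) \<ge> 1"
  proof -
    have "ln (3::real) \<le> ln (real n)" using n2 by simp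
    then show ?thesis using ln3_gt_1 by simp
  qed
  define y where "y = log 2 (1 + ln (real n))"
  have y0: "y \<ge> 0" unfolding y_def using ln1 by simp
  have rk: "real (kk n) = real_of_int \<lceil>y\<rceil>" unfolding kk_def y_def[symmetric] using y0 by simp
  have "real_of_int \<lceil>y\<rceil> < y + 1" using ceiling_correct[of y] by linarith
  moreover have "y \<le> log 2 (2 * ln (real n))" unfolding y_def using ln1 by simp
  moreover have "log 2 (2 * ln (real n)) = 1 + log 2 (ln (real n))" using ln1 by (simp add: log_mult)
  moreover have "log 2 (ln (real n)) \<le> 2 * ln (ln (real n))"
  proof -
    have h: "ln (2::real) \<ge> 1 / 2" using ln_lower[of 2] by simp
    have "log 2 (ln (real n)) = ln (ln (real n)) / ln 2" by (simp add: log_def)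
    also have "\<dots> \<le> ln (ln (real n)) / (1 / 2)" using h L by (intro divide_left_mono) auto
    finally show ?thesis by simp
  qed
  ultimately show ?thesis using rk by linarith
qed


lemma n3_of_L: assumes L: "ln (ln (real n)) > 0" shows "n \<ge> 3"
proof (rule ccontr)
  assume "\<not> n \<ge> 3"
  then have "n = 0 \<or> n = 1 \<or> n = 2" by auto
  moreover have "ln (ln (2::real)) \<le> 0"
  proof -
    have "ln (2::real) \<le> 1" using ln_le_minus_one[of 2] by simp
    moreover have "ln (2::real) > 0" by simp
    ultimately show ?thesis by simp
  qed
  ultimately show False using L by auto
qed

lemma L_lower: assumes L: "ln (ln (real n)) > 0" shows "ln (ln (real n)) \<ge> 8 / 100"
proof -
  have n3: "n \<ge> 3" using n3_of_L[OF L] .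
  have a: "ln (3::real) \<le> ln (real n)" using n3 by simp
  have b: "ln (3::real) > 0" using ln3_gt_1 by simp
  have c: "ln (real n) > 0" using a b by linarith
  have "ln (ln (3::real)) \<le> ln (ln (real n))" using a b c by (subst ln_le_cancel_iff) auto
  then show ?thesis using lnln3 by simp
qed

lemma main_part:
  fixes m n :: nat
  assumes m: "0 < m" and n: "0 < n"
  shows "\<exists>(d::nat) (V::(nat \<Rightarrow> int) set) (i::nat \<Rightarrow> nat) (j::nat \<Rightarrow> nat).
          reflexive_polytope d V \<and>
          (\<forall>l\<in>{1..m}. i l < j l \<and> j l < i (l + 1)) \<and>
          i (m + 1) \<le> d \<and>
          (\<forall>l\<in>{1..m}. hstar d V (i l) - hstar d V (j l) \<ge> int n \<and>
                       hstar d V (i (l + 1)) - hstar d V (j l) \<ge> int n) \<and>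
          (ln (ln (real n)) > 0 \<longrightarrow> real d \<le> 200 * real m * ln (ln (real n)))"
proof -
  define k where "k = kk n"
  define K where "K = k + m + 2"
  interpret c: cons k K by unfold_locales (simp add: K_def)
  define d where "d = 2 * k + 2 * K"
  define ii where "ii l = 2 * k + 2 * l" for l
  define jj where "jj l = 2 * k + 2 * l + 1" for l
  define N where "N = Wc k div 3"
  have Nn: "n \<le> N" unfolding N_def k_def using kk_big n by simp
  have hi: "hstar d c.VV (ii l) = 2 * int N" if "1 \<le> l" "l \<le> m + 1" for l
    unfolding d_def ii_def N_def using c.hstar_val[of "2 * k + 2 * l"] that by (simp add: K_def)
  have hj: "hstar d c.VV (jj l) = int N" if "1 \<le> l" "l \<le> m" for l
    unfolding d_def jj_def N_def using c.hstar_val[of "2 * k + 2 * l + 1"] that by (simp add: K_def)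
  have R: "reflexive_polytope d c.VV" unfolding d_def by (rule c.reflexive_VV)
  have A: "\<forall>l\<in>{1..m}. ii l < jj l \<and> jj l < ii (l + 1)" unfolding ii_def jj_def by auto
  have B: "ii (m + 1) \<le> d" unfolding ii_def d_def K_def by simp
  have Cc: "\<forall>l\<in>{1..m}. hstar d c.VV (ii l) - hstar d c.VV (jj l) \<ge> int n \<and>
                       hstar d c.VV (ii (l + 1)) - hstar d c.VV (jj l) \<ge> int n"
  proof
    fix l assume l: "l \<in> {1..m}"
    then have l1: "1 \<le> l" "l \<le> m" by auto
    show "hstar d c.VV (ii l) - hstar d c.VV (jj l) \<ge> int n \<and>
                       hstar d c.VV (ii (l + 1)) - hstar d c.VV (jj l) \<ge> int n"
      using hi[of l] hi[of "l + 1"] hj[of l] l1 Nn by simp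
  qed
  have D: "ln (ln (real n)) > 0 \<longrightarrow> real d \<le> 200 * real m * ln (ln (real n))"
  proof
    assume L: "0 < ln (ln (real n))"
    define L' where "L' = ln (ln (real n))"
    have Lb: "L' \<ge> 8 / 100" unfolding L'_def using L_lower[OF L] .
    have kb: "real k \<le> 2 + 2 * L'" unfolding k_def L'_def using kk_small[OF L] .
    have dd: "real d = 4 * real k + 2 * real m + 4" unfolding d_def K_def by simp
    have m1: "real m \<ge> 1" using m by simp
    have "real m * (200 * L' - 2) \<ge> 1 * (200 * L' - 2)"
      by (rule mult_right_mono) (use m1 Lb in auto)
    then have "real d \<le> 200 * real m * L'" using dd kb Lb by (simp add: algebra_simps)
    then show "real d \<le> 200 * real m * ln (ln (real n))" unfolding L'_def .
  qed
  show "\<exists>(d::nat) (V::(nat \<Rightarrow> int) set) (i::nat \<Rightarrow> nat) (j::nat \<Rightarrow> nat).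
          reflexive_polytope d V \<and>
          (\<forall>l\<in>{1..m}. i l < j l \<and> j l < i (l + 1)) \<and>
          i (m + 1) \<le> d \<and>
          (\<forall>l\<in>{1..m}. hstar d V (i l) - hstar d V (j l) \<ge> int n \<and>
                       hstar d V (i (l + 1)) - hstar d V (j l) \<ge> int n) \<and>
          (ln (ln (real n)) > 0 \<longrightarrow> real d \<le> 200 * real m * ln (ln (real n)))"
    using R A B Cc D by blast
qed

theorem theorem1p6:
  shows "\<exists>C::real. C > 0 \<and>
    (\<forall>m n :: nat. m > 0 \<longrightarrow> n > 0 \<longrightarrow>
      (\<exists>(d::nat) (V::(nat \<Rightarrow> int) set) (i::nat \<Rightarrow> nat) (j::nat \<Rightarrow> nat).
          reflexive_polytope d V \<and>
          (\<forall>l\<in>{1..m}. i l < j l \<and> j l < i (l + 1)) \<and>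
          i (m + 1) \<le> d \<and>
          (\<forall>l\<in>{1..m}. hstar d V (i l) - hstar d V (j l) \<ge> int n \<and>
                       hstar d V (i (l + 1)) - hstar d V (j l) \<ge> int n) \<and>
          (ln (ln (real n)) > 0 \<longrightarrow> real d \<le> C * real m * ln (ln (real n)))))"
  by (rule exI[of _ "200::real"]) (use main_part in auto)


end
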